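(* Let $p,q$ be positive integers and $\hat e\ge 2$ an integer. The length of every cycle of the Cat map over $\mathbb{Z}_{2^{\hat e}}$ belongs to the set $\{1\}\cup\{2^k\cdot T_1: k=0,1,\dots,\hat e-1\}$, where $T_1=3$ if $p$ and $q$ are both odd, $T_1=2$ if exactly one of $p,q$ is odd, and $T_1=1$ if $p$ and $q$ are both even.
   Context: $\mathbf{C}=\begin{bmatrix}1 & p\\ q & 1+pq\end{bmatrix}$; the Cat map over $\mathbb{Z}_{2^{\hat e}}$ is the bijection $v\mapsto\mathbf{C}v\bmod 2^{\hat e}$ of $\mathbb{Z}_{2^{\hat e}}^2$; a cycle of length $n$ is the orbit of a point $v$ for which $n$ is the least positive integer with $\mathbf{C}^nv\equiv v\pmod{2^{\hat e}}$. *)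

theory Defs
  imports Main
begin

text \<open>Cat map C = [[1,p],[q,1+pq]] acting on Z_{2^e}^2, with residues represented
  by integers in {0..<2^e}.\<close>

definition cat_map :: "int \<Rightarrow> int \<Rightarrow> nat \<Rightarrow> int \<times> int \<Rightarrow> int \<times> int" where
  "cat_map p q e v = ((fst v + p * snd v) mod 2 ^ e,
                      (q * fst v + (1 + p * q) * snd v) mod 2 ^ e)"

definition residue_points :: "nat \<Rightarrow> (int \<times> int) set" where
  "residue_points e = {0..<2 ^ e} \<times> {0..<2 ^ e}"

definition cycle_length :: "int \<Rightarrow> int \<Rightarrow> nat \<Rightarrow> int \<times> int \<Rightarrow> nat" where
  "cycle_length p q e v = (LEAST n. 0 < n \<and> (cat_map p q e ^^ n) v = v)"

definition cat_T1 :: "int \<Rightarrow> int \<Rightarrow> nat" where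
  "cat_T1 p q = (if odd p \<and> odd q then 3 else if odd p \<or> odd q then 2 else 1)"

end

theory Submission
  imports Defs "HOL-Number_Theory.Number_Theory"
begin

datatype mat = Mat int int int int

fun mmul :: "mat \<Rightarrow> mat \<Rightarrow> mat" where
  "mmul (Mat a b c d) (Mat a' b' c' d') =
     Mat (a*a'+b*c') (a*b'+b*d') (c*a'+d*c') (c*b'+d*d')"

fun app :: "mat \<Rightarrow> int \<times> int \<Rightarrow> int \<times> int" where
  "app (Mat a b c d) (x,y) = (a*x+b*y, c*x+d*y)"

fun mpow :: "int \<Rightarrow> int \<Rightarrow> nat \<Rightarrow> mat" where
  "mpow p q 0 = Mat 1 0 0 1"
| "mpow p q (Suc n) = mmul (Mat 1 p q (1+p*q)) (mpow p q n)"

fun near :: "int \<Rightarrow> mat \<Rightarrow> bool" where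
  "near m (Mat a b c d) = (m dvd (a-1) \<and> m dvd b \<and> m dvd c \<and> m dvd (d-1))"

fun pat :: "mat \<Rightarrow> bool" where
  "pat (Mat a b c d) = ((odd a \<and> odd b \<and> odd c \<and> even d) \<or> (even a \<and> odd b \<and> odd c \<and> odd d))"

lemma mmul_assoc: "mmul (mmul A B) C = mmul A (mmul B C)"
  by (cases A; cases B; cases C) (simp add: algebra_simps)

lemma mmul_id: "mmul (Mat 1 0 0 1) A = A"
  by (cases A) simp

lemma mpow_add: "mpow p q (m+n) = mmul (mpow p q m) (mpow p q n)"
  by (induction m) (simp_all add: mmul_id mmul_assoc)

lemma app_mmul: "app (mmul A B) v = app A (app B v)"
  by (cases A; cases B; cases v) (simp add: algebra_simps)

lemma funpow_cat:
  assumes "v \<in> residue_points e"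
  shows "(cat_map p q e ^^ n) v = (fst (app (mpow p q n) v) mod 2^e, snd (app (mpow p q n) v) mod 2^e)"
proof (induction n)
  case 0
  then show ?case using assms by (cases v) (simp add: residue_points_def)
next
  case (Suc n)
  obtain X Y where XY: "app (mpow p q n) v = (X,Y)" by fastforce
  have "(cat_map p q e ^^ Suc n) v = cat_map p q e (X mod 2^e, Y mod 2^e)"
    using Suc XY by simp
  also have "\<dots> = ((X + p*Y) mod 2^e, (q*X + (1+p*q)*Y) mod 2^e)"
    proof -
    have c1: "[X mod 2^e = X] (mod 2^e)" and c2: "[Y mod 2^e = Y] (mod 2^e)" by (simp_all add: cong_def)
    have "[X mod 2^e + p * (Y mod 2^e) = X + p*Y] (mod 2^e)"
      by (intro cong_add cong_mult cong_refl c1 c2)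
    moreover have "[q * (X mod 2^e) + (1+p*q) * (Y mod 2^e) = q*X + (1+p*q)*Y] (mod 2^e)"
      by (intro cong_add cong_mult cong_refl c1 c2)
    ultimately show ?thesis by (simp add: cong_def cat_map_def)
  qed
  also have "\<dots> = (fst (app (mpow p q (Suc n)) v) mod 2^e, snd (app (mpow p q (Suc n)) v) mod 2^e)"
    by (simp add: app_mmul XY)
  finally show ?case .
qed

lemma near_sq:
  assumes "near (2*t) M"
  shows "near (4*t) (mmul M M)"
proof -
  obtain a b c d where M: "M = Mat a b c d" by (cases M)
  from assms M have "2*t dvd a - 1" "2*t dvd b" "2*t dvd c" "2*t dvd d - 1" by auto
  then obtain \<alpha> \<beta> \<gamma> \<delta> where
    h0: "a - 1 = 2*t*\<alpha>" "b = 2*t*\<beta>" "c = 2*t*\<gamma>" "d - 1 = 2*t*\<delta>"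
    by (meson dvdE)
  hence h: "a = 1 + 2*t*\<alpha>" "b = 2*t*\<beta>" "c = 2*t*\<gamma>" "d = 1 + 2*t*\<delta>" by auto
  have e1: "a*a+b*c-1 = 4*t*(\<alpha> + t*(\<alpha>*\<alpha>+\<beta>*\<gamma>))" unfolding h by (simp add: algebra_simps)
  have e2: "a*b+b*d = 4*t*(\<beta> + t*\<beta>*(\<alpha>+\<delta>))" unfolding h by (simp add: algebra_simps)
  have e3: "c*a+d*c = 4*t*(\<gamma> + t*\<gamma>*(\<alpha>+\<delta>))" unfolding h by (simp add: algebra_simps)
  have e4: "c*b+d*d-1 = 4*t*(\<delta> + t*(\<delta>*\<delta>+\<beta>*\<gamma>))" unfolding h by (simp add: algebra_simps)
  show ?thesis unfolding M using e1 e2 e3 e4 by simp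
qed

lemma pat_sq: "pat M \<Longrightarrow> pat (mmul M M)"
  by (cases M) auto

lemma pat_pow:
  assumes "odd p" "odd q" "k \<ge> 1"
  shows "pat (mpow p q (2^k))"
  using assms(3)
proof (induction k rule: dec_induct)
  case base
  then show ?case using assms(1,2) by (simp add: numeral_2_eq_2)
next
  case (step k)
  have "mpow p q (2^Suc k) = mmul (mpow p q (2^k)) (mpow p q (2^k))"
    using mpow_add[of p q "2^k" "2^k"] by (simp add: mult_2)
  then show ?case using pat_sq step by simp
qed

lemma pat_kill:
  fixes x y :: int
  assumes "pat M" and "2^e dvd (fst (app M (x,y)) - x)" and "2^e dvd (snd (app M (x,y)) - y)"
  shows "(2::int)^e dvd x \<and> (2::int)^e dvd y"
proof -
  obtain a b c d where M: "M = Mat a b c d" by (cases M)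
  define D where "D = (a-1)*(d-1) - b*c"
  have oD: "odd D" using assms(1) M unfolding D_def by auto
  have cop: "coprime ((2::int)^e) D" using oD by (simp add: coprime_power_left_iff)
  have h1: "2^e dvd ((a-1)*x + b*y)" and h2: "2^e dvd (c*x + (d-1)*y)"
    using assms(2,3) M by (simp_all add: algebra_simps)
  have "D*x = (d-1)*((a-1)*x + b*y) - b*(c*x + (d-1)*y)" unfolding D_def by (simp add: algebra_simps)
  hence "2^e dvd D*x" using h1 h2 by simp
  hence X: "2^e dvd x" using cop coprime_dvd_mult_right_iff by blast
  have "D*y = (a-1)*(c*x + (d-1)*y) - c*((a-1)*x + b*y)" unfolding D_def by (simp add: algebra_simps)
  hence "2^e dvd D*y" using h1 h2 by simp
  hence "2^e dvd y" using cop coprime_dvd_mult_right_iff by blast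
  with X show ?thesis by simp
qed

lemma near_T1: "near 2 (mpow p q (cat_T1 p q))"
proof (cases "odd p")
  case True
  show ?thesis
  proof (cases "odd q")
    case True
    with \<open>odd p\<close> show ?thesis by (simp add: cat_T1_def numeral_3_eq_3 algebra_simps)
  next
    case False
    with \<open>odd p\<close> show ?thesis by (simp add: cat_T1_def numeral_2_eq_2 algebra_simps)
  qed
next
  case False
  then show ?thesis by (cases "odd q") (simp_all add: cat_T1_def numeral_2_eq_2 algebra_simps)
qed

lemma near_pow: "near (2^(k+1)) (mpow p q (cat_T1 p q * 2^k))"
proof (induction k)
  case 0
  then show ?case using near_T1 by simp
next
  case (Suc k)
  have "mpow p q (cat_T1 p q * 2^Suc k) = mmul (mpow p q (cat_T1 p q * 2^k)) (mpow p q (cat_T1 p q * 2^k))"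
    using mpow_add[of p q "cat_T1 p q * 2^k" "cat_T1 p q * 2^k"] by (simp add: mult_2 algebra_simps)
  moreover have "near (4*2^k) (mmul (mpow p q (cat_T1 p q * 2^k)) (mpow p q (cat_T1 p q * 2^k)))"
    using near_sq[of "2^k"] Suc by simp
  ultimately show ?case by simp
qed

lemma near_fix:
  assumes "near (2^e) M" "v \<in> residue_points e"
  shows "(fst (app M v) mod 2^e, snd (app M v) mod 2^e) = v"
proof -
  obtain a b c d where M: "M = Mat a b c d" by (cases M)
  obtain x y where v: "v = (x,y)" by fastforce
  have x: "x mod 2^e = x" and y: "y mod 2^e = y" using assms(2) v by (simp_all add: residue_points_def)
  have "a*x + b*y = x + ((a-1)*x + b*y)" by (simp add: algebra_simps)
  moreover have "2^e dvd ((a-1)*x + b*y)" using assms(1) M by simp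
  ultimately have 1: "(a*x+b*y) mod 2^e = x" using x by (metis mod_add_self2 dvdE mod_mult_self4 add.commute mult.commute)
  have "c*x + d*y = y + (c*x + (d-1)*y)" by (simp add: algebra_simps)
  moreover have "2^e dvd (c*x + (d-1)*y)" using assms(1) M by simp
  ultimately have 2: "(c*x+d*y) mod 2^e = y" using y by (metis dvdE mod_mult_self4 add.commute mult.commute)
  show ?thesis using 1 2 M v by simp
qed

lemma period_dvd:
  fixes f :: "'a \<Rightarrow> 'a"
  assumes "(f ^^ N) v = v" "0 < N"
  defines "n \<equiv> LEAST n. 0 < n \<and> (f ^^ n) v = v"
  shows "0 < n \<and> (f ^^ n) v = v \<and> n dvd N"
proof -
  have ex: "0 < n \<and> (f ^^ n) v = v" unfolding n_def by (rule LeastI[of _ N]) (use assms in auto)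
  have mult: "(f ^^ (n*j)) v = v" for j
  proof (induction j)
    case 0 then show ?case by simp
  next
    case (Suc j)
    have "(f ^^ (n*Suc j)) v = (f ^^ n) ((f ^^ (n*j)) v)" by (simp add: funpow_add)
    then show ?case using Suc ex by simp
  qed
  have "(f ^^ N) v = (f ^^ (N mod n)) ((f ^^ (n*(N div n))) v)"
    by (metis funpow_add comp_apply mod_mult_div_eq)
  hence r: "(f ^^ (N mod n)) v = v" using assms(1) mult by simp
  have "N mod n = 0"
  proof (rule ccontr)
    assume "N mod n \<noteq> 0"
    hence "n \<le> N mod n" using r unfolding n_def by (intro Least_le) simp
    moreover have "N mod n < n" using ex by simp
    ultimately show False by simp
  qed
  thus ?thesis using ex by auto
qed

lemma pow2_cases:
  fixes n :: nat
  assumes "n dvd 2^j"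
  obtains i where "i \<le> j" "n = 2^i"
  using assms divides_primepow_nat[of 2 n j] by auto

theorem mainTheorem18:
  fixes p q :: int and e :: nat and v :: "int \<times> int"
  assumes "p > 0" and "q > 0" and "e \<ge> 2"
    and "v \<in> residue_points e"
  shows "cycle_length p q e v \<in> {1} \<union> {2 ^ k * cat_T1 p q | k. k \<le> e - 1}"
proof -
  define f where "f = cat_map p q e"
  define T where "T = cat_T1 p q"
  define N where "N = T * 2^(e-1)"
  define n where "n = cycle_length p q e v"
  have e1: "e - 1 + 1 = e" using assms(3) by simp
  have Ne: "near (2^e) (mpow p q N)"
    using near_pow[of "e-1" p q] unfolding N_def T_def e1 by simp
  have fN: "(f ^^ N) v = v"
    unfolding f_def using funpow_cat[OF assms(4)] near_fix[OF Ne assms(4)] by simp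
  have T1: "T \<ge> 1" unfolding T_def cat_T1_def by simp
  hence N0: "0 < N" unfolding N_def by simp
  have per: "0 < n \<and> (f ^^ n) v = v \<and> n dvd N"
    using period_dvd[OF fN N0] unfolding n_def cycle_length_def f_def by simp
  have goal: "n \<in> {1} \<union> {2 ^ k * T | k. k \<le> e - 1}"
  proof (cases "odd p \<and> odd q")
    case True
    hence T3: "T = 3" unfolding T_def cat_T1_def by simp
    show ?thesis
    proof (cases "3 dvd n")
      case True
      then obtain m where m: "n = 3*m" by blast
      have "m dvd 2^(e-1)" using per m T3 unfolding N_def by simp
      then obtain i where "i \<le> e-1" "m = 2^i" by (rule pow2_cases)
      then show ?thesis using m T3 by auto
    next
      case False
      hence "coprime 3 n" by (intro prime_imp_coprime) simp_all
      hence "n dvd 2^(e-1)" using per T3 unfolding N_def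
        by (metis coprime_commute coprime_dvd_mult_right_iff)
      then obtain i where i: "i \<le> e-1" "n = 2^i" by (rule pow2_cases)
      show ?thesis
      proof (cases "i = 0")
        case True then show ?thesis using i by simp
      next
        case False
        obtain x y where v: "v = (x,y)" by fastforce
        have xr: "0 \<le> x" "x < 2^e" "0 \<le> y" "y < 2^e" using assms(4) v by (auto simp: residue_points_def)
        define M where "M = mpow p q (2^i)"
        have pM: "pat M" unfolding M_def using pat_pow[of p q i] True False by simp
        have "(fst (app M v) mod 2^e, snd (app M v) mod 2^e) = v"
          using per funpow_cat[OF assms(4)] i unfolding M_def f_def by simp
        hence "fst (app M (x,y)) mod 2^e = x mod 2^e" "snd (app M (x,y)) mod 2^e = y mod 2^e"
          using v xr by simp_all
        hence "2^e dvd (fst (app M (x,y)) - x)" "2^e dvd (snd (app M (x,y)) - y)"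
          by (simp_all add: mod_eq_dvd_iff)
        from pat_kill[OF pM this] have "(2::int)^e dvd x \<and> (2::int)^e dvd y" .
        hence "x mod 2^e = 0" "y mod 2^e = 0" by simp_all
        hence "x = 0" "y = 0" using xr by (simp_all add: mod_pos_pos_trivial)
        hence "f v = v" unfolding f_def cat_map_def using v by simp
        hence "n \<le> 1" unfolding n_def cycle_length_def f_def by (intro Least_le) simp
        then show ?thesis using per by simp
      qed
    qed
  next
    case False
    show ?thesis
    proof (cases "odd p \<or> odd q")
      case True
      hence T2: "T = 2" using False unfolding T_def cat_T1_def by auto
      have "N = 2^e" unfolding N_def T2 using assms(3)
        by (metis e1 power_Suc mult.commute Suc_eq_plus1 power_Suc2)
      then obtain i where i: "i \<le> e" "n = 2^i" using per by (metis pow2_cases)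
      show ?thesis
      proof (cases i)
        case 0 then show ?thesis using i by simp
      next
        case (Suc j)
        then show ?thesis using i T2 by auto
      qed
    next
      case False
      hence T1: "T = 1" unfolding T_def cat_T1_def by auto
      obtain i where i: "i \<le> e-1" "n = 2^i" using per unfolding N_def T1 by (metis mult_1 pow2_cases)
      then show ?thesis using T1 by auto
    qed
  qed
  then show ?thesis unfolding n_def T_def .
qed

end
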